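(* Let $\alpha > 0$, $\beta > 0$, $\tau > 0$, and let $I$ be an interval which is a finite union of mesh intervals $[k\tau,(k+1)\tau]$, $k \in \mathbb{Z}$. Let $u$ be continuous on $I$ and affine on each mesh interval, and let $v$ be its upwinded interpolant. Then $$\int_I |\dot v |^2 = \Phi(p) \int_I |\dot u|^2,$$ where $p=\beta \tau / \alpha $ is the P\'eclet number and $$\Phi(p) = \left ( \frac{\exp(p) +1}{\exp(p) -1} \right ) \frac{p}{2}.$$
   Context: The upwinded interpolant of a continuous function $u$ is the unique continuous function $v$ with $v(k\tau) = u(k\tau)$ at every node $k\tau$ and which, on each mesh interval $[k\tau, (k+1)\tau]$, is of the form $v(t) = c_1 + c_2 \exp(-\beta t/\alpha)$ for constants $c_1, c_2$ (depending on the interval). A dot denotes the derivative. *)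

theory Defs
  imports "HOL-Analysis.Analysis"
begin

text \<open>The interval I = [a*tau, b*tau] (a < b integers) is the union of the mesh
intervals [k*tau, (k+1)*tau], a \<le> k < b.\<close>

definition mesh_interval :: "real \<Rightarrow> int \<Rightarrow> real set" where
  "mesh_interval \<tau> k = {real_of_int k * \<tau> .. real_of_int (k + 1) * \<tau>}"

definition piecewise_affine_on_mesh :: "real \<Rightarrow> int \<Rightarrow> int \<Rightarrow> (real \<Rightarrow> real) \<Rightarrow> bool" where
  "piecewise_affine_on_mesh \<tau> a b u \<longleftrightarrow>
     continuous_on {real_of_int a * \<tau> .. real_of_int b * \<tau>} u \<and>
     (\<forall>k. a \<le> k \<and> k < b \<longrightarrow>
        (\<exists>c d. \<forall>t\<in>mesh_interval \<tau> k. u t = c + d * t))"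

definition upwinded_interpolant ::
  "real \<Rightarrow> real \<Rightarrow> real \<Rightarrow> int \<Rightarrow> int \<Rightarrow> (real \<Rightarrow> real) \<Rightarrow> (real \<Rightarrow> real) \<Rightarrow> bool" where
  "upwinded_interpolant \<alpha> \<beta> \<tau> a b u v \<longleftrightarrow>
     continuous_on {real_of_int a * \<tau> .. real_of_int b * \<tau>} v \<and>
     (\<forall>k. a \<le> k \<and> k \<le> b \<longrightarrow> v (real_of_int k * \<tau>) = u (real_of_int k * \<tau>)) \<and>
     (\<forall>k. a \<le> k \<and> k < b \<longrightarrow>
        (\<exists>c1 c2. \<forall>t\<in>mesh_interval \<tau> k. v t = c1 + c2 * exp (- \<beta> * t / \<alpha>)))"

definition peclet_Phi :: "real \<Rightarrow> real" where
  "peclet_Phi p = ((exp p + 1) / (exp p - 1)) * (p / 2)"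

end

theory Submission
  imports Defs
begin

lemma piece:
  fixes \<alpha> \<beta> \<tau> L c d c1 c2 :: real and u v :: "real \<Rightarrow> real"
  assumes al: "\<alpha> > 0" and be: "\<beta> > 0" and ta: "\<tau> > 0"
    and hu: "\<forall>t\<in>{L..L+\<tau>}. u t = c + d * t"
    and hv: "\<forall>t\<in>{L..L+\<tau>}. v t = c1 + c2 * exp (- \<beta> * t / \<alpha>)"
    and eL: "v L = u L" and eR: "v (L+\<tau>) = u (L+\<tau>)"
  shows "((\<lambda>t. (deriv v t)\<^sup>2) has_integral (peclet_Phi (\<beta> * \<tau> / \<alpha>) * (d\<^sup>2 * \<tau>))) {L..L+\<tau>}"
    and "((\<lambda>t. (deriv u t)\<^sup>2) has_integral (d\<^sup>2 * \<tau>)) {L..L+\<tau>}"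
proof -
  have dv: "deriv v t = c2 * (exp (- \<beta> * t / \<alpha>) * (- \<beta> / \<alpha>))" if t: "t \<in> {L<..<L+\<tau>}" for t
  proof -
    have "((\<lambda>s. c1 + c2 * exp (- \<beta> * s / \<alpha>)) has_field_derivative c2 * (exp (- \<beta> * t / \<alpha>) * (- \<beta> / \<alpha>))) (at t)"
      using al by (auto intro!: derivative_eq_intros)
    then have "(v has_field_derivative c2 * (exp (- \<beta> * t / \<alpha>) * (- \<beta> / \<alpha>))) (at t)"
      by (rule has_field_derivative_transform_within_open[where S="{L<..<L+\<tau>}"]) (use t hv in auto)
    then show ?thesis by (rule DERIV_imp_deriv)
  qed
  have du: "deriv u t = d" if t: "t \<in> {L<..<L+\<tau>}" for t
  proof -
    have "((\<lambda>s. c + d * s) has_field_derivative d) (at t)"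
      by (auto intro!: derivative_eq_intros)
    then have "(u has_field_derivative d) (at t)"
      by (rule has_field_derivative_transform_within_open[where S="{L<..<L+\<tau>}"]) (use t hu in auto)
    then show ?thesis by (rule DERIV_imp_deriv)
  qed
  have "((\<lambda>t. d\<^sup>2) has_integral (d\<^sup>2 * \<tau>)) {L..L+\<tau>}"
    using has_integral_const_real[of "d\<^sup>2" L "L+\<tau>"] ta by (simp add: mult.commute)
  then show "((\<lambda>t. (deriv u t)\<^sup>2) has_integral (d\<^sup>2 * \<tau>)) {L..L+\<tau>}"
    by (rule has_integral_spike_finite[where S="{L, L+\<tau>}", rotated 2]) (auto simp: du)
  define F where "F t = - (c2\<^sup>2 * \<beta> / (2*\<alpha>)) * exp (-2 * \<beta> * t / \<alpha>)" for t
  define f where "f t = (c2 * (exp (- \<beta> * t / \<alpha>) * (- \<beta> / \<alpha>)))\<^sup>2" for t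
  have Fd: "(F has_vector_derivative f t) (at t within {L..L+\<tau>})" for t
  proof -
    have "(F has_field_derivative (- (c2\<^sup>2 * \<beta> / (2*\<alpha>)) * (exp (-2 * \<beta> * t / \<alpha>) * (-2 * \<beta> / \<alpha>)))) (at t)"
      unfolding F_def using al by (auto intro!: derivative_eq_intros)
    moreover have "(- (c2\<^sup>2 * \<beta> / (2*\<alpha>)) * (exp (-2 * \<beta> * t / \<alpha>) * (-2 * \<beta> / \<alpha>))) = f t"
    proof -
      have "exp (-2 * \<beta> * t / \<alpha>) = (exp (- \<beta> * t / \<alpha>))\<^sup>2"
        by (simp add: power2_eq_square flip: exp_add)
      then show ?thesis using al unfolding f_def by (simp add: power2_eq_square field_simps)
    qed
    ultimately show ?thesis
      by (simp add: has_real_derivative_iff_has_vector_derivative[symmetric] has_field_derivative_at_within)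
  qed
  have If: "(f has_integral (F (L+\<tau>) - F L)) {L..L+\<tau>}"
    by (rule fundamental_theorem_of_calculus) (use ta Fd in auto)
  define A where "A = exp (- \<beta> * L / \<alpha>)"
  define q where "q = exp (- (\<beta> * \<tau> / \<alpha>))"
  have Apos: "A > 0" unfolding A_def by simp
  have qpos: "q > 0" unfolding q_def by simp
  have qlt: "q < 1" unfolding q_def using al be ta by simp
  have eR': "exp (- \<beta> * (L+\<tau>) / \<alpha>) = A * q"
    unfolding A_def q_def using al by (simp add: field_simps add_divide_distrib flip: exp_add)
  have e2L: "exp (-2 * \<beta> * L / \<alpha>) = A\<^sup>2"
    unfolding A_def by (simp add: power2_eq_square flip: exp_add)
  have e2R: "exp (-2 * \<beta> * (L+\<tau>) / \<alpha>) = (A*q)\<^sup>2"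
    unfolding eR'[symmetric] by (simp add: power2_eq_square flip: exp_add)
  have vu: "c2 * (A*q - A) = d * \<tau>"
  proof -
    have "v (L+\<tau>) - v L = u (L+\<tau>) - u L" using eL eR by simp
    moreover have "v (L+\<tau>) - v L = c2 * (A*q - A)"
    proof -
      have "v (L+\<tau>) = c1 + c2 * exp (- \<beta> * (L+\<tau>) / \<alpha>)" using hv ta by simp
      moreover have "v L = c1 + c2 * A" using hv ta unfolding A_def by simp
      ultimately show ?thesis unfolding eR' by (simp add: algebra_simps)
    qed
    moreover have "u (L+\<tau>) - u L = d * \<tau>" using hu ta by (simp add: algebra_simps)
    ultimately show ?thesis by simp
  qed
  have Phi: "peclet_Phi (\<beta> * \<tau> / \<alpha>) = (1 + q) / (1 - q) * (\<beta> * \<tau> / \<alpha>) / 2"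
  proof -
    have e: "exp (\<beta> * \<tau> / \<alpha>) = 1 / q" unfolding q_def by (simp add: exp_minus inverse_eq_divide)
    show ?thesis unfolding peclet_Phi_def e using qpos qlt al by (simp add: field_simps)
  qed
  have "F (L+\<tau>) - F L = peclet_Phi (\<beta> * \<tau> / \<alpha>) * (d\<^sup>2 * \<tau>)"
  proof -
    have "F (L+\<tau>) - F L = c2\<^sup>2 * \<beta> / (2*\<alpha>) * (A\<^sup>2 - (A*q)\<^sup>2)"
      unfolding F_def e2L e2R by (simp add: algebra_simps)
    also have "\<dots> = (1 + q) / (1 - q) * (\<beta> * \<tau> / \<alpha>) / 2 * ((d*\<tau>)\<^sup>2 / \<tau>)"
      unfolding vu[symmetric] using qlt ta al by (simp add: field_simps power2_eq_square)
    also have "\<dots> = peclet_Phi (\<beta> * \<tau> / \<alpha>) * (d\<^sup>2 * \<tau>)"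
      unfolding Phi using ta by (simp add: power2_eq_square)
    finally show ?thesis .
  qed
  with If have "(f has_integral peclet_Phi (\<beta> * \<tau> / \<alpha>) * (d\<^sup>2 * \<tau>)) {L..L+\<tau>}" by simp
  then show "((\<lambda>t. (deriv v t)\<^sup>2) has_integral (peclet_Phi (\<beta> * \<tau> / \<alpha>) * (d\<^sup>2 * \<tau>))) {L..L+\<tau>}"
    by (rule has_integral_spike_finite[where S="{L, L+\<tau>}", rotated 2]) (auto simp: dv f_def)
qed

lemma combine:
  fixes f :: "real \<Rightarrow> real" and \<tau> :: real and a :: int
  assumes ta: "\<tau> > 0"
    and h: "\<forall>k. a \<le> k \<and> k < a + int n \<longrightarrow> (f has_integral I k) {real_of_int k * \<tau> .. real_of_int k * \<tau> + \<tau>}"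
  shows "(f has_integral (\<Sum>k\<in>{a..<a + int n}. I k)) {real_of_int a * \<tau> .. real_of_int (a + int n) * \<tau>}"
  using h
proof (induction n)
  case 0
  then show ?case by (simp add: has_integral_refl)
next
  case (Suc n)
  have IH: "(f has_integral (\<Sum>k\<in>{a..<a + int n}. I k)) {real_of_int a * \<tau> .. real_of_int (a + int n) * \<tau>}"
    using Suc by auto
  have last: "(f has_integral I (a + int n)) {real_of_int (a + int n) * \<tau> .. real_of_int (a + int n) * \<tau> + \<tau>}"
    using spec[OF Suc.prems, of "a + int n"] by simp
  have "(f has_integral ((\<Sum>k\<in>{a..<a + int n}. I k) + I (a + int n))) {real_of_int a * \<tau> .. real_of_int (a + int n) * \<tau> + \<tau>}"
    by (rule has_integral_combine[OF _ _ IH last]) (use ta in \<open>auto intro!: mult_right_mono\<close>)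
  moreover have "{a..<a + int (Suc n)} = insert (a + int n) {a..<a + int n}" by auto
  ultimately show ?case by (simp add: distrib_right algebra_simps)
qed

theorem proposition10:
  fixes \<alpha> \<beta> \<tau> :: real and a b :: int and u v :: "real \<Rightarrow> real"
  assumes "\<alpha> > 0" and "\<beta> > 0" and "\<tau> > 0" and "a < b"
    and "piecewise_affine_on_mesh \<tau> a b u"
    and "upwinded_interpolant \<alpha> \<beta> \<tau> a b u v"
  shows "integral {real_of_int a * \<tau> .. real_of_int b * \<tau>} (\<lambda>t. (deriv v t)\<^sup>2)
         = peclet_Phi (\<beta> * \<tau> / \<alpha>)
           * integral {real_of_int a * \<tau> .. real_of_int b * \<tau>} (\<lambda>t. (deriv u t)\<^sup>2)"
proof -
  let ?P = "peclet_Phi (\<beta> * \<tau> / \<alpha>)"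
  have ex: "\<exists>D. ((\<lambda>t. (deriv v t)\<^sup>2) has_integral (?P * D)) {real_of_int k * \<tau> .. real_of_int k * \<tau> + \<tau>}
           \<and> ((\<lambda>t. (deriv u t)\<^sup>2) has_integral D) {real_of_int k * \<tau> .. real_of_int k * \<tau> + \<tau>}"
    if k: "a \<le> k \<and> k < b" for k
  proof -
    have mi: "mesh_interval \<tau> k = {real_of_int k * \<tau> .. real_of_int k * \<tau> + \<tau>}"
      unfolding mesh_interval_def by (simp add: distrib_right)
    obtain c d where hu: "\<forall>t\<in>{real_of_int k * \<tau> .. real_of_int k * \<tau> + \<tau>}. u t = c + d * t"
      using assms(5) k unfolding piecewise_affine_on_mesh_def by (metis mi)
    obtain c1 c2 where hv: "\<forall>t\<in>{real_of_int k * \<tau> .. real_of_int k * \<tau> + \<tau>}. v t = c1 + c2 * exp (- \<beta> * t / \<alpha>)"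
      using assms(6) k unfolding upwinded_interpolant_def by (metis mi)
    have eL: "v (real_of_int k * \<tau>) = u (real_of_int k * \<tau>)"
      using assms(6) k unfolding upwinded_interpolant_def by auto
    have "v (real_of_int (k+1) * \<tau>) = u (real_of_int (k+1) * \<tau>)"
    proof -
      have "a \<le> k+1 \<and> k+1 \<le> b" using k by simp
      then show ?thesis using assms(6) unfolding upwinded_interpolant_def by blast
    qed
    then have eR: "v (real_of_int k * \<tau> + \<tau>) = u (real_of_int k * \<tau> + \<tau>)"
      by (simp add: distrib_right)
    show ?thesis
      using piece[OF assms(1-3) hu hv eL eR] by blast
  qed
  then obtain D where D: "\<forall>k. a \<le> k \<and> k < b \<longrightarrow>
      ((\<lambda>t. (deriv v t)\<^sup>2) has_integral (?P * D k)) {real_of_int k * \<tau> .. real_of_int k * \<tau> + \<tau>}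
      \<and> ((\<lambda>t. (deriv u t)\<^sup>2) has_integral D k) {real_of_int k * \<tau> .. real_of_int k * \<tau> + \<tau>}"
    by metis
  define n where "n = nat (b - a)"
  have bn: "b = a + int n" unfolding n_def using assms(4) by simp
  have 1: "((\<lambda>t. (deriv v t)\<^sup>2) has_integral (\<Sum>k\<in>{a..<a + int n}. ?P * D k)) {real_of_int a * \<tau> .. real_of_int (a + int n) * \<tau>}"
    by (rule combine[OF assms(3)]) (use D bn in auto)
  have 2: "((\<lambda>t. (deriv u t)\<^sup>2) has_integral (\<Sum>k\<in>{a..<a + int n}. D k)) {real_of_int a * \<tau> .. real_of_int (a + int n) * \<tau>}"
    by (rule combine[OF assms(3)]) (use D bn in auto)
  show ?thesis
    using integral_unique[OF 1] integral_unique[OF 2] bn by (simp add: sum_distrib_left)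
qed

end
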